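(* Let $m \geq 2$ be an integer, let $1 \leq p \leq q < \infty$, and let $1 \leq p_i \leq q_i < \infty$ for $i = 1, 2, \dots, m$. Define $p^*$ by $\frac{1}{p^*} = \sum_{i=1}^{m} \frac{1}{p_i}$, and assume $\frac{1}{p^*} \leq \frac{1}{p}$ and $\sum_{i=1}^{m} \frac{1}{q_i} = \frac{1}{q}$. Then for all functions $f_i \in w\mathcal{M}^{p_i}_{q_i}(\mathbb{R}^n)$, $i=1,\dots,m$, we have $$ \Bigl\| \prod_{i=1}^{m} f_i \Bigr\|_{w\mathcal{M}^{p}_{q}} \leq \prod_{i=1}^{m} \left( \frac{p_i}{p^*} \right)^{\frac{1}{p_i}} \| f_i \|_{w\mathcal{M}^{p_i}_{q_i}}. $$
   Context: For $1 \leq p \leq q < \infty$, the weak Morrey space $w\mathcal{M}^p_q(\mathbb{R}^n)$ is the set of all measurable functions $f:\mathbb{R}^n \to \mathbb{R}$ such that $$\|f\|_{w\mathcal{M}^p_q} = \sup_{B = B(a,r),\ \gamma>0} |B|^{\frac{1}{q} - \frac{1}{p}}\, \gamma\, \bigl| \{x \in B: |f(x)| > \gamma \} \bigr|^{\frac{1}{p}} < \infty,$$ where the supremum is over all open balls $B=B(a,r)\subseteq\mathbb{R}^n$ (center $a$, radius $r>0$) and all $\gamma>0$, and $|\cdot|$ denotes Lebesgue measure. Equivalently, $\|f\|_{w\mathcal{M}^p_q} = \sup_{B} |B|^{\frac1q-\frac1p}\|f\|_{L^{p,\infty}(B)}$ with $\|f\|_{L^{p,\infty}(B)} = \sup_{\gamma>0}\gamma\,|\{x\in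 B:|f(x)|>\gamma\}|^{1/p}$. The product $\prod_{i=1}^m f_i$ is the pointwise product. *)

theory Defs
  imports "HOL-Analysis.Analysis"
begin

definition wmorrey_norm :: "real \<Rightarrow> real \<Rightarrow> ('a::euclidean_space \<Rightarrow> real) \<Rightarrow> ereal" where
  "wmorrey_norm p q f =
     (SUP (a, r, \<gamma>) \<in> {(a, r, \<gamma>). (r::real) > 0 \<and> (\<gamma>::real) > 0}.
        ereal (measure lebesgue (ball (a::'a) r) powr (1/q - 1/p) * \<gamma> *
               measure lebesgue {x \<in> ball a r. \<gamma> < \<bar>f x\<bar>} powr (1/p)))"

definition wmorrey :: "real \<Rightarrow> real \<Rightarrow> ('a::euclidean_space \<Rightarrow> real) set" where
  "wmorrey p q = {f. f \<in> borel_measurable lebesgue \<and> wmorrey_norm p q f < \<infinity>}"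

end

theory Submission
  imports Defs
begin
lemma ballpos: "0 < r \<Longrightarrow> 0 < measure lebesgue (ball (a::'a::euclidean_space) r)"
  using content_ball_pos[of r a] by simp

lemma core:
  fixes I :: "nat set" and a pp lam :: "nat \<Rightarrow> real" and e \<gamma> :: real
  assumes fin: "finite I" and pos: "\<And>i. i \<in> I \<Longrightarrow> a i > 0 \<and> pp i > 0"
    and g: "\<gamma> > 0" and e: "e \<ge> 0" and S: "S = (\<Sum>i\<in>I. 1 / pp i)" and Spos: "S > 0"
    and bound: "\<And>lam. (\<And>i. i \<in> I \<Longrightarrow> lam i > 0) \<Longrightarrow> (\<Prod>i\<in>I. lam i) = \<gamma>
        \<Longrightarrow> e \<le> (\<Sum>i\<in>I. (a i / lam i) powr pp i)"
  shows "\<gamma> * e powr S \<le> (\<Prod>i\<in>I. a i * (pp i * S) powr (1 / pp i))"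
proof -
  define K where "K = (\<Prod>i\<in>I. a i * pp i powr (1 / pp i))"
  have K: "K > 0" unfolding K_def proof (intro prod_pos)
    fix i assume "i \<in> I" then show "0 < a i * pp i powr (1 / pp i)" using pos by force
  qed
  define \<mu> where "\<mu> = (K / \<gamma>) powr (1 / S)"
  have mu: "\<mu> > 0" using K g unfolding \<mu>_def by simp
  define l where "l i = a i * (pp i / \<mu>) powr (1 / pp i)" for i
  have lpos: "l i > 0" if "i \<in> I" for i using pos[OF that] mu unfolding l_def by simp
  have "(\<Prod>i\<in>I. l i) = K * (\<Prod>i\<in>I. \<mu> powr (- (1 / pp i)))"
    unfolding l_def K_def prod.distrib[symmetric]
  proof (rule prod.cong[OF refl])
    fix i assume i: "i \<in> I"
    show "a i * (pp i / \<mu>) powr (1 / pp i) = a i * pp i powr (1 / pp i) * \<mu> powr - (1 / pp i)"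
      using pos[OF i] mu by (simp add: powr_divide powr_minus_divide)
  qed
  also have "(\<Prod>i\<in>I. \<mu> powr (- (1 / pp i))) = \<mu> powr (- S)"
    using mu by (simp add: S powr_sum[symmetric] sum_negf)
  also have "\<mu> powr (- S) = \<gamma> / K"
    unfolding \<mu>_def using K g Spos by (simp add: powr_powr powr_minus divide_inverse)
  finally have prodl: "(\<Prod>i\<in>I. l i) = \<gamma>" using K by simp
  have "e \<le> (\<Sum>i\<in>I. (a i / l i) powr pp i)" by (rule bound[OF lpos prodl])
  also have "\<dots> = (\<Sum>i\<in>I. \<mu> * (1 / pp i))"
  proof (rule sum.cong[OF refl])
    fix i assume i: "i \<in> I"
    have "a i / l i = (\<mu> / pp i) powr (1 / pp i)"
      using pos[OF i] mu unfolding l_def by (simp add: powr_divide)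
    then show "(a i / l i) powr pp i = \<mu> * (1 / pp i)"
      using pos[OF i] mu by (simp add: powr_powr)
  qed
  also have "\<dots> = \<mu> * S" by (simp add: S sum_distrib_left)
  finally have eb: "e \<le> \<mu> * S" .
  have "e powr S \<le> (\<mu> * S) powr S" using eb e Spos by (intro powr_mono2) auto
  also have "\<dots> = (K / \<gamma>) * S powr S"
    using mu Spos K g unfolding \<mu>_def by (simp add: powr_mult powr_powr)
  finally have "\<gamma> * e powr S \<le> \<gamma> * ((K / \<gamma>) * S powr S)" using g by (intro mult_left_mono) auto
  also have "\<dots> = K * S powr S" using g by simp
  also have "S powr S = (\<Prod>i\<in>I. S powr (1 / pp i))"
    using Spos by (subst (2) S) (simp add: powr_sum)
  also have "K * \<dots> = (\<Prod>i\<in>I. a i * (pp i * S) powr (1 / pp i))"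
    unfolding K_def prod.distrib[symmetric]
    by (rule prod.cong[OF refl]) (use pos Spos in \<open>simp add: powr_mult\<close>)
  finally show ?thesis .
qed

lemma core0:
  fixes I :: "nat set" and a pp :: "nat \<Rightarrow> real" and e \<gamma> :: real
  assumes fin: "finite I" and pos: "\<And>i. i \<in> I \<Longrightarrow> a i \<ge> 0 \<and> pp i > 0"
    and g: "\<gamma> > 0" and e: "e \<ge> 0" and S: "S = (\<Sum>i\<in>I. 1 / pp i)" and Spos: "S > 0"
    and bound: "\<And>lam. (\<And>i. i \<in> I \<Longrightarrow> lam i > 0) \<Longrightarrow> (\<Prod>i\<in>I. lam i) = \<gamma>
        \<Longrightarrow> e \<le> (\<Sum>i\<in>I. (a i / lam i) powr pp i)"
  shows "\<gamma> * e powr S \<le> (\<Prod>i\<in>I. a i * (pp i * S) powr (1 / pp i))"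
proof -
  define G where "G \<epsilon> = (\<Prod>i\<in>I. (a i + \<epsilon>) * (pp i * S) powr (1 / pp i))" for \<epsilon> :: real
  have le: "\<gamma> * e powr S \<le> G \<epsilon>" if eps: "\<epsilon> > 0" for \<epsilon>
    unfolding G_def
  proof (rule core[OF fin _ g e S Spos])
    fix i assume "i \<in> I" then show "0 < a i + \<epsilon> \<and> 0 < pp i" using pos eps by force
  next
    fix lam :: "nat \<Rightarrow> real" assume l: "\<And>i. i \<in> I \<Longrightarrow> lam i > 0" "(\<Prod>i\<in>I. lam i) = \<gamma>"
    have "e \<le> (\<Sum>i\<in>I. (a i / lam i) powr pp i)" by (rule bound[OF l])
    also have "\<dots> \<le> (\<Sum>i\<in>I. ((a i + \<epsilon>) / lam i) powr pp i)"
    proof (rule sum_mono)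
      fix i assume i: "i \<in> I"
      show "(a i / lam i) powr pp i \<le> ((a i + \<epsilon>) / lam i) powr pp i"
        using pos[OF i] l(1)[OF i] eps by (intro powr_mono2 divide_right_mono) auto
    qed
    finally show "e \<le> (\<Sum>i\<in>I. ((a i + \<epsilon>) / lam i) powr pp i)" .
  qed
  have "(G \<longlongrightarrow> G 0) (at_right 0)"
    unfolding G_def by (intro tendsto_intros)
  moreover have "\<forall>\<^sub>F \<epsilon> in at_right 0. \<gamma> * e powr S \<le> G \<epsilon>"
    using le by (auto simp: eventually_at_filter)
  ultimately have "\<gamma> * e powr S \<le> G 0"
    by (intro tendsto_lowerbound) auto
  then show ?thesis unfolding G_def by simp
qed

lemma wn_upper:
  fixes f :: "'a::euclidean_space \<Rightarrow> real"
  assumes "r > 0" "\<gamma> > 0"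
  shows "ereal (measure lebesgue (ball a r) powr (1/q - 1/p) * \<gamma> *
               measure lebesgue {x \<in> ball a r. \<gamma> < \<bar>f x\<bar>} powr (1/p)) \<le> wmorrey_norm p q f"
  unfolding wmorrey_norm_def
  by (rule SUP_upper2[where i="(a, r, \<gamma>)"]) (use assms in auto)

lemma wn_nonneg:
  fixes f :: "'a::euclidean_space \<Rightarrow> real"
  shows "0 \<le> wmorrey_norm p q f"
proof -
  have "ereal 0 \<le> ereal (measure lebesgue (ball (0::'a) 1) powr (1/q - 1/p) * 1 *
               measure lebesgue {x \<in> ball 0 1. 1 < \<bar>f x\<bar>} powr (1/p))"
    by simp
  also have "\<dots> \<le> wmorrey_norm p q f" by (rule wn_upper) auto
  finally show ?thesis by (simp add: zero_ereal_def)
qed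

lemma level:
  fixes mB X N lam p q :: real
  assumes mB: "mB > 0" and X: "X \<ge> 0" and l: "lam > 0" and p: "p > 0"
    and h: "mB powr (1/q - 1/p) * lam * X powr (1/p) \<le> N"
  shows "X \<le> (N * mB powr (1/p - 1/q) / lam) powr p"
proof -
  have c: "mB powr (1/q - 1/p) * mB powr (1/p - 1/q) = 1"
    using mB by (simp add: powr_add[symmetric])
  have "lam * X powr (1/p) \<le> N * mB powr (1/p - 1/q)"
  proof -
    have "lam * X powr (1/p) = (mB powr (1/q - 1/p) * lam * X powr (1/p)) * mB powr (1/p - 1/q)"
      using c by (simp add: algebra_simps)
    also have "\<dots> \<le> N * mB powr (1/p - 1/q)" using h mB by (intro mult_right_mono) auto
    finally show ?thesis .
  qed
  then have "X powr (1/p) \<le> N * mB powr (1/p - 1/q) / lam" using l by (simp add: field_simps)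
  then have "(X powr (1/p)) powr p \<le> (N * mB powr (1/p - 1/q) / lam) powr p"
    using p by (intro powr_mono2) auto
  also have "(X powr (1/p)) powr p = X" using p X by (simp add: powr_powr)
  finally show ?thesis .
qed



theorem theorem2p2:
  fixes m :: nat and p q :: real and ps qs :: "nat \<Rightarrow> real"
    and f :: "nat \<Rightarrow> 'a::euclidean_space \<Rightarrow> real"
  assumes "m \<ge> 2"
    and "1 \<le> p" "p \<le> q"
    and "\<And>i. i \<in> {1..m} \<Longrightarrow> 1 \<le> ps i \<and> ps i \<le> qs i"
    and "(\<Sum>i\<in>{1..m}. 1 / ps i) \<le> 1 / p"
    and "(\<Sum>i\<in>{1..m}. 1 / qs i) = 1 / q"
    and "\<And>i. i \<in> {1..m} \<Longrightarrow> f i \<in> wmorrey (ps i) (qs i)"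
  shows "wmorrey_norm p q (\<lambda>x. \<Prod>i\<in>{1..m}. f i x)
           \<le> ereal (\<Prod>i\<in>{1..m}.
                 (ps i / (1 / (\<Sum>j\<in>{1..m}. 1 / ps j))) powr (1 / ps i)
                 * real_of_ereal (wmorrey_norm (ps i) (qs i) (f i)))"
proof -
  define I where "I = {1..m}"
  define S where "S = (\<Sum>j\<in>I. 1 / ps j)"
  have finI: "finite I" unfolding I_def by simp
  have Ine: "I \<noteq> {}" using assms(1) unfolding I_def by auto
  have psI: "\<And>i. i \<in> I \<Longrightarrow> 1 \<le> ps i \<and> ps i \<le> qs i" using assms(4) unfolding I_def by blast
  have Spos: "S > 0" unfolding S_def using finI Ine psI
    by (intro sum_pos) (auto, fastforce)
  have Sp: "S \<le> 1 / p" using assms(5) unfolding S_def I_def .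
  have Sq: "(\<Sum>i\<in>I. 1 / qs i) = 1 / q" using assms(6) unfolding I_def .
  have fI: "\<And>i. i \<in> I \<Longrightarrow> f i \<in> borel_measurable lebesgue \<and> wmorrey_norm (ps i) (qs i) (f i) < \<infinity>"
    using assms(7) unfolding I_def wmorrey_def by blast
  define N where "N i = real_of_ereal (wmorrey_norm (ps i) (qs i) (f i))" for i
  have Neq: "ereal (N i) = wmorrey_norm (ps i) (qs i) (f i)" if i: "i \<in> I" for i
    using fI[OF i] wn_nonneg[of "ps i" "qs i" "f i"] unfolding N_def
    by (auto simp: ereal_real)
  have Nnn: "N i \<ge> 0" if i: "i \<in> I" for i
    using Neq[OF i] wn_nonneg[of "ps i" "qs i" "f i"] by (metis ereal_less_eq(5) zero_ereal_def)
  have "wmorrey_norm p q (\<lambda>x. \<Prod>i\<in>I. f i x)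
           \<le> ereal (\<Prod>i\<in>I. (ps i * S) powr (1 / ps i) * N i)"
    unfolding wmorrey_norm_def
  proof (rule SUP_least, clarify)
    fix a :: 'a and r \<gamma> :: real assume r: "r > 0" and g: "\<gamma> > 0"
    define mB where "mB = measure lebesgue (ball a r)"
    have mB: "mB > 0" unfolding mB_def using ballpos[OF r] .
    define A where "A i = N i * mB powr (1 / ps i - 1 / qs i)" for i
    define E where "E = {x \<in> ball a r. \<gamma> < \<bar>\<Prod>i\<in>I. f i x\<bar>}"
    define Es where "Es l i = {x \<in> ball a r. l < \<bar>f i x\<bar>}" for l i
    have ballf: "ball a r \<in> fmeasurable lebesgue" using lmeasurable_ball by blast
    have Essets: "Es l i \<in> sets lebesgue" if i: "i \<in> I" for l i
    proof -
      have "{x \<in> space lebesgue. l < \<bar>f i x\<bar>} \<in> sets lebesgue"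
      proof -
        have "(\<lambda>x. \<bar>f i x\<bar>) \<in> borel_measurable lebesgue"
          using fI[OF i] by (intro borel_measurable_abs) blast
        from borel_measurable_iff_greater[THEN iffD1, OF this] show ?thesis by blast
      qed
      then have "ball a r \<inter> {x \<in> space lebesgue. l < \<bar>f i x\<bar>} \<in> sets lebesgue"
        using ballf by (intro sets.Int) (auto simp: fmeasurable_def)
      moreover have "ball a r \<inter> {x \<in> space lebesgue. l < \<bar>f i x\<bar>} = Es l i"
        unfolding Es_def by auto
      ultimately show ?thesis by simp
    qed
    have Esets: "E \<in> sets lebesgue"
    proof -
      have "(\<lambda>x. \<Prod>i\<in>I. f i x) \<in> borel_measurable lebesgue"
        using fI by (intro borel_measurable_prod) auto
      then have "(\<lambda>x. \<bar>\<Prod>i\<in>I. f i x\<bar>) \<in> borel_measurable lebesgue"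
        by (rule borel_measurable_abs)
      from borel_measurable_iff_greater[THEN iffD1, OF this]
      have "{x \<in> space lebesgue. \<gamma> < \<bar>\<Prod>i\<in>I. f i x\<bar>} \<in> sets lebesgue" by blast
      then have "ball a r \<inter> {x \<in> space lebesgue. \<gamma> < \<bar>\<Prod>i\<in>I. f i x\<bar>} \<in> sets lebesgue"
        using ballf by (intro sets.Int) (auto simp: fmeasurable_def)
      moreover have "ball a r \<inter> {x \<in> space lebesgue. \<gamma> < \<bar>\<Prod>i\<in>I. f i x\<bar>} = E"
        unfolding E_def by auto
      ultimately show ?thesis by simp
    qed
    have EmB: "measure lebesgue E \<le> mB"
      unfolding mB_def using Esets ballf by (intro measure_mono_fmeasurable) (auto simp: E_def)
    have Ann: "A i \<ge> 0" if "i \<in> I" for i using Nnn[OF that] unfolding A_def by simp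
    have lev: "measure lebesgue (Es l i) \<le> (A i / l) powr ps i" if i: "i \<in> I" and l: "l > 0" for i l
    proof -
      have "ereal (mB powr (1 / qs i - 1 / ps i) * l * measure lebesgue (Es l i) powr (1 / ps i))
            \<le> ereal (N i)"
        unfolding Neq[OF i] mB_def Es_def by (rule wn_upper[OF r l])
      then have "mB powr (1 / qs i - 1 / ps i) * l * measure lebesgue (Es l i) powr (1 / ps i) \<le> N i"
        by simp
      from level[OF mB _ l _ this] psI[OF i] show ?thesis unfolding A_def by simp
    qed
    have main: "\<gamma> * measure lebesgue E powr S \<le> (\<Prod>i\<in>I. A i * (ps i * S) powr (1 / ps i))"
    proof (rule core0[OF finI _ g _ S_def Spos])
      fix i assume "i \<in> I" then show "0 \<le> A i \<and> 0 < ps i" using Ann psI by force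
    next
      show "0 \<le> measure lebesgue E" by simp
    next
      fix lam :: "nat \<Rightarrow> real" assume l: "\<And>i. i \<in> I \<Longrightarrow> lam i > 0" "(\<Prod>i\<in>I. lam i) = \<gamma>"
      have sub: "E \<subseteq> (\<Union>i\<in>I. Es (lam i) i)"
      proof
        fix x assume x: "x \<in> E"
        show "x \<in> (\<Union>i\<in>I. Es (lam i) i)"
        proof (rule ccontr)
          assume "x \<notin> (\<Union>i\<in>I. Es (lam i) i)"
          then have le: "\<And>i. i \<in> I \<Longrightarrow> \<bar>f i x\<bar> \<le> lam i" using x unfolding Es_def E_def by auto
          have "\<bar>\<Prod>i\<in>I. f i x\<bar> = (\<Prod>i\<in>I. \<bar>f i x\<bar>)" by (simp add: abs_prod)
          also have "\<dots> \<le> (\<Prod>i\<in>I. lam i)" using le by (intro prod_mono) auto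
          finally show False using x l(2) unfolding E_def by auto
        qed
      qed
      have Usets: "(\<Union>i\<in>I. Es (lam i) i) \<in> sets lebesgue"
        using finI Essets by (intro sets.finite_UN) auto
      have Uf: "(\<Union>i\<in>I. Es (lam i) i) \<in> fmeasurable lebesgue"
        by (rule fmeasurableI2[OF ballf _ Usets]) (auto simp: Es_def)
      have "measure lebesgue E \<le> measure lebesgue (\<Union>i\<in>I. Es (lam i) i)"
        by (rule measure_mono_fmeasurable[OF sub Esets Uf])
      also have "\<dots> \<le> (\<Sum>i\<in>I. measure lebesgue (Es (lam i) i))"
        using finI Essets by (intro measure_UNION_le) auto
      also have "\<dots> \<le> (\<Sum>i\<in>I. (A i / lam i) powr ps i)"
        using lev l(1) by (intro sum_mono) auto
      finally show "measure lebesgue E \<le> (\<Sum>i\<in>I. (A i / lam i) powr ps i)" .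
    qed
    have step1: "mB powr (1/q - 1/p) * \<gamma> * measure lebesgue E powr (1/p)
        \<le> mB powr (1/q - S) * (\<gamma> * measure lebesgue E powr S)"
    proof (cases "measure lebesgue E = 0")
      case True then show ?thesis using mB g by simp
    next
      case False
      then have Ep: "measure lebesgue E > 0" using measure_nonneg[of lebesgue E] by linarith
      have "measure lebesgue E powr (1/p) = measure lebesgue E powr S * measure lebesgue E powr (1/p - S)"
        by (simp add: powr_add[symmetric])
      also have "\<dots> \<le> measure lebesgue E powr S * mB powr (1/p - S)"
        using EmB Sp Ep by (intro mult_left_mono powr_mono2) auto
      finally have "mB powr (1/q - 1/p) * \<gamma> * measure lebesgue E powr (1/p)
          \<le> mB powr (1/q - 1/p) * \<gamma> * (measure lebesgue E powr S * mB powr (1/p - S))"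
        using mB g by (intro mult_left_mono) auto
      also have "\<dots> = (mB powr (1/q - 1/p) * mB powr (1/p - S)) * (\<gamma> * measure lebesgue E powr S)"
        by (simp add: algebra_simps)
      also have "mB powr (1/q - 1/p) * mB powr (1/p - S) = mB powr (1/q - S)"
        by (simp add: powr_add[symmetric])
      finally show ?thesis .
    qed
    have prodA: "(\<Prod>i\<in>I. A i * (ps i * S) powr (1 / ps i))
        = (\<Prod>i\<in>I. (ps i * S) powr (1 / ps i) * N i) * mB powr (S - 1/q)"
    proof -
      have "(\<Prod>i\<in>I. A i * (ps i * S) powr (1 / ps i))
          = (\<Prod>i\<in>I. (ps i * S) powr (1 / ps i) * N i) * (\<Prod>i\<in>I. mB powr (1 / ps i - 1 / qs i))"
        unfolding A_def prod.distrib[symmetric] by (simp add: algebra_simps)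
      also have "(\<Prod>i\<in>I. mB powr (1 / ps i - 1 / qs i)) = mB powr (\<Sum>i\<in>I. 1 / ps i - 1 / qs i)"
        using mB by (simp add: powr_sum)
      also have "(\<Sum>i\<in>I. 1 / ps i - 1 / qs i) = S - 1/q"
        unfolding S_def Sq[symmetric] by (simp add: sum_subtractf)
      finally show ?thesis .
    qed
    have "mB powr (1/q - 1/p) * \<gamma> * measure lebesgue E powr (1/p)
        \<le> mB powr (1/q - S) * ((\<Prod>i\<in>I. (ps i * S) powr (1 / ps i) * N i) * mB powr (S - 1/q))"
    proof -
      have "mB powr (1/q - S) * (\<gamma> * measure lebesgue E powr S)
          \<le> mB powr (1/q - S) * (\<Prod>i\<in>I. A i * (ps i * S) powr (1 / ps i))"
        using main by (intro mult_left_mono) auto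
      from order_trans[OF step1 this] show ?thesis unfolding prodA .
    qed
    also have "\<dots> = (\<Prod>i\<in>I. (ps i * S) powr (1 / ps i) * N i) * (mB powr (1/q - S) * mB powr (S - 1/q))"
      by (simp add: algebra_simps)
    also have "mB powr (1/q - S) * mB powr (S - 1/q) = 1"
      using mB by (simp add: powr_add[symmetric])
    finally show "ereal (measure lebesgue (ball a r) powr (1 / q - 1 / p) * \<gamma> *
         measure lebesgue {x \<in> ball a r. \<gamma> < \<bar>\<Prod>i\<in>I. f i x\<bar>} powr (1 / p))
       \<le> ereal (\<Prod>i\<in>I. (ps i * S) powr (1 / ps i) * N i)"
      unfolding mB_def E_def by simp
  qed
  also have "(\<Prod>i\<in>I. (ps i * S) powr (1 / ps i) * N i)
      = (\<Prod>i\<in>{1..m}. (ps i / (1 / (\<Sum>j\<in>{1..m}. 1 / ps j))) powr (1 / ps i)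
                 * real_of_ereal (wmorrey_norm (ps i) (qs i) (f i)))"
    unfolding I_def S_def N_def by simp
  finally show ?thesis unfolding I_def .
qed

end
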